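(* Let $S$ be a semiring, let $f:L\to M$ and $g:L\to N$ be morphisms of left $S$-semimodules, and let $(g',f';P)$ be a pushout of $(f,g)$, with $g':M\to P$, $f':N\to P$, $g'\circ f=f'\circ g$. Then: (1) if $f$ is surjective, then $f'$ is surjective; (2) if $f$ is $i$-normal (i.e. $f(L)\subseteq M$ is subtractive), then $f'$ is $i$-normal (i.e. $f'(N)\subseteq P$ is subtractive); (3) if $f$ is a normal epimorphism, then $f'$ is a normal epimorphism; (4) if $f$ is injective and $g$ is a normal epimorphism, then $f'$ is injective.
   Context: A semiring $(S,+,0,\cdot,1)$ consists of a commutative monoid $(S,+,0)$ and a monoid $(S,\cdot,1)$ with $0\neq 1$, absorbing zero and both distributive laws; left $S$-semimodules and $S$-linear maps are as for modules over rings (without subtraction). For an $S$-linear map $h:X\to Y$, $\mathrm{Ker}(h)=\{x\in X\mid h(x)=0\}$. $h$ is $k$-normal if $h(x)=h(x')$ implies $x+k=x'+k'$ for some $k,k'\in\mathrm{Ker}(h)$; $h$ is $i$-normal if $h(X)=\overline{h(X)}$, where for $A\subseteq Y$ the subtractive closure is $\overline{A}=\{y\in Y\mid y+a=a'\text{ for some }a,a'\in A\}$ (a subsemimodule $A$ is subtractive if $A=\overline A$). A normal epimorphism is a surjective $k$-normal $S$-linear map. A pushout of $(f,g)$ is a triple $(g',f';P)$ with $S$-linear $g':M\to P$, $f':N\to P$, $g'\circ f=f'\circ g$, such that for every $Q$ and $S$-linear $g^*:M\to Q$, $f^*:N\to Q$ with $g^*\circ f=f^*\circ g$ there is a unique $S$-linear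 $\varphi:P\to Q$ with $\varphi\circ g'=g^*$, $\varphi\circ f'=f^*$. *)

theory Defs
  imports Main
begin

record ('s, 'a) smod =
  scar :: "'a set"
  sadd :: "'a \<Rightarrow> 'a \<Rightarrow> 'a"
  szero :: "'a"
  ssmul :: "'s \<Rightarrow> 'a \<Rightarrow> 'a"

definition semimodule :: "('s::semiring_1, 'a, 'b) smod_scheme \<Rightarrow> bool" where
  "semimodule X \<longleftrightarrow>
     szero X \<in> scar X \<and>
     (\<forall>x\<in>scar X. \<forall>y\<in>scar X. sadd X x y \<in> scar X) \<and>
     (\<forall>r. \<forall>x\<in>scar X. ssmul X r x \<in> scar X) \<and>
     (\<forall>x\<in>scar X. \<forall>y\<in>scar X. \<forall>z\<in>scar X. sadd X (sadd X x y) z = sadd X x (sadd X y z)) \<and>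
     (\<forall>x\<in>scar X. \<forall>y\<in>scar X. sadd X x y = sadd X y x) \<and>
     (\<forall>x\<in>scar X. sadd X (szero X) x = x) \<and>
     (\<forall>r s. \<forall>x\<in>scar X. ssmul X (r * s) x = ssmul X r (ssmul X s x)) \<and>
     (\<forall>r s. \<forall>x\<in>scar X. ssmul X (r + s) x = sadd X (ssmul X r x) (ssmul X s x)) \<and>
     (\<forall>r. \<forall>x\<in>scar X. \<forall>y\<in>scar X. ssmul X r (sadd X x y) = sadd X (ssmul X r x) (ssmul X r y)) \<and>
     (\<forall>x\<in>scar X. ssmul X 1 x = x) \<and>
     (\<forall>x\<in>scar X. ssmul X 0 x = szero X) \<and>
     (\<forall>r. ssmul X r (szero X) = szero X)"

definition linear_map ::
  "('s::semiring_1, 'a, 'c) smod_scheme \<Rightarrow> ('s, 'b, 'd) smod_scheme \<Rightarrow> ('a \<Rightarrow> 'b) \<Rightarrow> bool" where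
  "linear_map X Y h \<longleftrightarrow>
     (\<forall>x\<in>scar X. h x \<in> scar Y) \<and>
     (\<forall>x\<in>scar X. \<forall>y\<in>scar X. h (sadd X x y) = sadd Y (h x) (h y)) \<and>
     h (szero X) = szero Y \<and>
     (\<forall>r. \<forall>x\<in>scar X. h (ssmul X r x) = ssmul Y r (h x))"

definition Ker :: "('s, 'a, 'c) smod_scheme \<Rightarrow> ('s, 'b, 'd) smod_scheme \<Rightarrow> ('a \<Rightarrow> 'b) \<Rightarrow> 'a set" where
  "Ker X Y h = {x \<in> scar X. h x = szero Y}"

definition k_normal :: "('s, 'a, 'c) smod_scheme \<Rightarrow> ('s, 'b, 'd) smod_scheme \<Rightarrow> ('a \<Rightarrow> 'b) \<Rightarrow> bool" where
  "k_normal X Y h \<longleftrightarrow>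
     (\<forall>x\<in>scar X. \<forall>x'\<in>scar X. h x = h x' \<longrightarrow>
        (\<exists>k\<in>Ker X Y h. \<exists>k'\<in>Ker X Y h. sadd X x k = sadd X x' k'))"

definition sub_closure :: "('s, 'b, 'd) smod_scheme \<Rightarrow> 'b set \<Rightarrow> 'b set" where
  "sub_closure Y A = {y \<in> scar Y. \<exists>a\<in>A. \<exists>a'\<in>A. sadd Y y a = a'}"

definition i_normal :: "('s, 'a, 'c) smod_scheme \<Rightarrow> ('s, 'b, 'd) smod_scheme \<Rightarrow> ('a \<Rightarrow> 'b) \<Rightarrow> bool" where
  "i_normal X Y h \<longleftrightarrow> h ` scar X = sub_closure Y (h ` scar X)"

definition surjective_map :: "('s, 'a, 'c) smod_scheme \<Rightarrow> ('s, 'b, 'd) smod_scheme \<Rightarrow> ('a \<Rightarrow> 'b) \<Rightarrow> bool" where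
  "surjective_map X Y h \<longleftrightarrow> h ` scar X = scar Y"

definition normal_epi :: "('s, 'a, 'c) smod_scheme \<Rightarrow> ('s, 'b, 'd) smod_scheme \<Rightarrow> ('a \<Rightarrow> 'b) \<Rightarrow> bool" where
  "normal_epi X Y h \<longleftrightarrow> surjective_map X Y h \<and> k_normal X Y h"

text \<open>Pushout of (f,g), where f : L \<rightarrow> M and g : L \<rightarrow> N, with respect to all test
  semimodules Q whose carrier lies in the type 'q (selected by the TYPE argument).\<close>
definition is_pushout_wrt ::
  "'q itself \<Rightarrow> ('s::semiring_1, 'l) smod \<Rightarrow> ('s, 'm) smod \<Rightarrow> ('s, 'n) smod \<Rightarrow>
   ('l \<Rightarrow> 'm) \<Rightarrow> ('l \<Rightarrow> 'n) \<Rightarrow> ('s, 'p) smod \<Rightarrow> ('m \<Rightarrow> 'p) \<Rightarrow> ('n \<Rightarrow> 'p) \<Rightarrow> bool" where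
  "is_pushout_wrt _ L M N f g P g' f' \<longleftrightarrow>
     linear_map M P g' \<and> linear_map N P f' \<and>
     (\<forall>x\<in>scar L. g' (f x) = f' (g x)) \<and>
     (\<forall>(Q :: ('s, 'q) smod) gs fs.
        semimodule Q \<and> linear_map M Q gs \<and> linear_map N Q fs \<and>
        (\<forall>x\<in>scar L. gs (f x) = fs (g x)) \<longrightarrow>
        (\<exists>\<phi>. linear_map P Q \<phi> \<and> (\<forall>x\<in>scar M. \<phi> (g' x) = gs x) \<and> (\<forall>y\<in>scar N. \<phi> (f' y) = fs y)) \<and>
        (\<forall>\<phi> \<psi>. linear_map P Q \<phi> \<and> (\<forall>x\<in>scar M. \<phi> (g' x) = gs x) \<and> (\<forall>y\<in>scar N. \<phi> (f' y) = fs y) \<and>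
                linear_map P Q \<psi> \<and> (\<forall>x\<in>scar M. \<psi> (g' x) = gs x) \<and> (\<forall>y\<in>scar N. \<psi> (f' y) = fs y)
                \<longrightarrow> (\<forall>z\<in>scar P. \<phi> z = \<psi> z)))"

end

theory Submission
  imports Defs
begin


lemma sm_zero: "semimodule X \<Longrightarrow> szero X \<in> scar X"
  unfolding semimodule_def by metis
lemma sm_add_closed: "semimodule X \<Longrightarrow> x \<in> scar X \<Longrightarrow> y \<in> scar X \<Longrightarrow> sadd X x y \<in> scar X"
  unfolding semimodule_def by metis
lemma sm_smul_closed: "semimodule X \<Longrightarrow> x \<in> scar X \<Longrightarrow> ssmul X r x \<in> scar X"
  unfolding semimodule_def by metis
lemma sm_assoc: "semimodule X \<Longrightarrow> x \<in> scar X \<Longrightarrow> y \<in> scar X \<Longrightarrow> z \<in> scar X \<Longrightarrow>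
    sadd X (sadd X x y) z = sadd X x (sadd X y z)"
  unfolding semimodule_def by metis
lemma sm_comm: "semimodule X \<Longrightarrow> x \<in> scar X \<Longrightarrow> y \<in> scar X \<Longrightarrow> sadd X x y = sadd X y x"
  unfolding semimodule_def by metis
lemma sm_lzero: "semimodule X \<Longrightarrow> x \<in> scar X \<Longrightarrow> sadd X (szero X) x = x"
  unfolding semimodule_def by metis
lemma sm_rzero: "semimodule X \<Longrightarrow> x \<in> scar X \<Longrightarrow> sadd X x (szero X) = x"
  by (metis sm_comm sm_lzero sm_zero)
lemma sm_lcomm: "semimodule X \<Longrightarrow> x \<in> scar X \<Longrightarrow> y \<in> scar X \<Longrightarrow> z \<in> scar X \<Longrightarrow>
    sadd X x (sadd X y z) = sadd X y (sadd X x z)"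
  by (metis sm_assoc sm_comm)
lemma sm_smul_mult: "semimodule X \<Longrightarrow> x \<in> scar X \<Longrightarrow> ssmul X (r * s) x = ssmul X r (ssmul X s x)"
  unfolding semimodule_def by metis
lemma sm_smul_radd: "semimodule X \<Longrightarrow> x \<in> scar X \<Longrightarrow> ssmul X (r + s) x = sadd X (ssmul X r x) (ssmul X s x)"
  unfolding semimodule_def by metis
lemma sm_smul_add: "semimodule X \<Longrightarrow> x \<in> scar X \<Longrightarrow> y \<in> scar X \<Longrightarrow>
    ssmul X r (sadd X x y) = sadd X (ssmul X r x) (ssmul X r y)"
  unfolding semimodule_def by metis
lemma sm_smul_one: "semimodule X \<Longrightarrow> x \<in> scar X \<Longrightarrow> ssmul X 1 x = x"
  unfolding semimodule_def by metis
lemma sm_smul_0: "semimodule X \<Longrightarrow> x \<in> scar X \<Longrightarrow> ssmul X 0 x = szero X"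
  unfolding semimodule_def by metis
lemma sm_smul_zero: "semimodule X \<Longrightarrow> ssmul X r (szero X) = szero X"
  unfolding semimodule_def by metis

lemma semimodule_image:
  assumes X: "semimodule X" and h: "linear_map X Y h" and surj: "h ` scar X = scar Y"
    and z: "\<forall>r. ssmul Y r (szero Y) = szero Y"
  shows "semimodule Y"
proof -
  have hc: "\<And>x. x \<in> scar X \<Longrightarrow> h x \<in> scar Y"
    and ha: "\<And>x y. x \<in> scar X \<Longrightarrow> y \<in> scar X \<Longrightarrow> sadd Y (h x) (h y) = h (sadd X x y)"
    and h0: "szero Y = h (szero X)"
    and hs: "\<And>r x. x \<in> scar X \<Longrightarrow> ssmul Y r (h x) = h (ssmul X r x)"
    using h unfolding linear_map_def by auto
  have ex: "\<And>y. y \<in> scar Y \<Longrightarrow> \<exists>x\<in>scar X. y = h x" using surj by auto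
  note cl = sm_zero[OF X] sm_add_closed[OF X] sm_smul_closed[OF X]
  note A = sm_lzero[OF X]
          sm_smul_mult[OF X] sm_smul_radd[OF X] sm_smul_add[OF X] sm_smul_one[OF X] sm_smul_0[OF X]
  have 1: "szero Y \<in> scar Y" using h0 hc cl by simp
  have 2: "\<forall>x\<in>scar Y. \<forall>y\<in>scar Y. sadd Y x y \<in> scar Y"
    by (clarify, drule ex, drule ex, clarify, simp add: ha cl hc)
  have 3: "\<forall>r. \<forall>x\<in>scar Y. ssmul Y r x \<in> scar Y"
    by (clarify, drule ex, clarify, simp add: hs cl hc)
  have 4: "\<forall>x\<in>scar Y. \<forall>y\<in>scar Y. \<forall>z\<in>scar Y. sadd Y (sadd Y x y) z = sadd Y x (sadd Y y z)"
    by (clarify, drule ex, drule ex, drule ex, clarify, simp add: ha cl sm_assoc[OF X])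
  have 5: "\<forall>x\<in>scar Y. \<forall>y\<in>scar Y. sadd Y x y = sadd Y y x"
    by (clarify, drule ex, drule ex, clarify, metis ha sm_comm[OF X])
  have 6: "\<forall>x\<in>scar Y. sadd Y (szero Y) x = x"
    by (clarify, drule ex, clarify, simp add: ha h0 cl A)
  have 7: "\<forall>r s. \<forall>x\<in>scar Y. ssmul Y (r * s) x = ssmul Y r (ssmul Y s x)"
    by (clarify, drule ex, clarify, simp add: hs cl A)
  have 8: "\<forall>r s. \<forall>x\<in>scar Y. ssmul Y (r + s) x = sadd Y (ssmul Y r x) (ssmul Y s x)"
    by (clarify, drule ex, clarify, simp add: hs ha cl A)
  have 9: "\<forall>r. \<forall>x\<in>scar Y. \<forall>y\<in>scar Y. ssmul Y r (sadd Y x y) = sadd Y (ssmul Y r x) (ssmul Y r y)"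
    by (clarify, drule ex, drule ex, clarify, simp add: hs ha cl A)
  have 10: "\<forall>x\<in>scar Y. ssmul Y 1 x = x"
    by (clarify, drule ex, clarify, simp add: hs cl A)
  have 11: "\<forall>x\<in>scar Y. ssmul Y 0 x = szero Y"
    by (clarify, drule ex, clarify, simp add: hs h0 cl A)
  show ?thesis unfolding semimodule_def using 1 2 3 4 5 6 7 8 9 10 11 z by (intro conjI) assumption+
qed

lemma linear_comp: "linear_map X Y h \<Longrightarrow> linear_map Y Z k \<Longrightarrow> linear_map X Z (\<lambda>x. k (h x))"
  by (simp add: linear_map_def)

lemma linear_zero: "semimodule Y \<Longrightarrow> linear_map X Y (\<lambda>_. szero Y)"
  by (simp add: linear_map_def sm_zero sm_lzero sm_smul_zero)

lemma linear_widen: "linear_map X (Y\<lparr>scar := C\<rparr>) \<phi> \<Longrightarrow> C \<subseteq> scar Y \<Longrightarrow> linear_map X Y \<phi>"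
  by (auto simp: linear_map_def)

lemma sub_semimodule:
  assumes "semimodule P" "S \<subseteq> scar P" "szero P \<in> S" "\<forall>a\<in>S. \<forall>b\<in>S. sadd P a b \<in> S"
    "\<forall>r. \<forall>a\<in>S. ssmul P r a \<in> S"
  shows "semimodule (P\<lparr>scar := S\<rparr>)"
  unfolding semimodule_def using assms(2-5) apply simp
  apply (intro conjI ballI allI)
  using assms(1,2) by (meson subsetD sm_assoc sm_comm sm_lzero sm_smul_mult sm_smul_radd sm_smul_add
     sm_smul_one sm_smul_0 sm_smul_zero)+

section \<open>Transport\<close>

definition transp :: "('b \<Rightarrow> 'q) \<Rightarrow> ('s::semiring_1, 'b, 'c) smod_scheme \<Rightarrow> ('s, 'q) smod" where
  "transp e R = \<lparr>scar = e ` scar R, sadd = (\<lambda>a b. e (sadd R (inv e a) (inv e b))),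
     szero = e (szero R), ssmul = (\<lambda>r a. e (ssmul R r (inv e a)))\<rparr>"

lemma transp_linear: "inj e \<Longrightarrow> linear_map R (transp e R) e"
  by (simp add: linear_map_def transp_def)

lemma transp_sm: "inj e \<Longrightarrow> semimodule R \<Longrightarrow> semimodule (transp e R)"
  apply (rule semimodule_image[OF _ transp_linear])
     apply assumption+
   apply (simp add: transp_def)
  apply (simp add: transp_def sm_smul_zero)
  done

section \<open>Quotients\<close>

definition subm :: "('s::semiring_1, 'a, 'c) smod_scheme \<Rightarrow> 'a set \<Rightarrow> bool" where
  "subm X K \<longleftrightarrow> K \<subseteq> scar X \<and> szero X \<in> K \<and> (\<forall>a\<in>K. \<forall>b\<in>K. sadd X a b \<in> K) \<and>
     (\<forall>r. \<forall>a\<in>K. ssmul X r a \<in> K)"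

definition qrel :: "('s::semiring_1, 'a, 'c) smod_scheme \<Rightarrow> 'a set \<Rightarrow> 'a \<Rightarrow> 'a \<Rightarrow> bool" where
  "qrel X K x y \<longleftrightarrow> x \<in> scar X \<and> y \<in> scar X \<and> (\<exists>a\<in>K. \<exists>b\<in>K. sadd X x a = sadd X y b)"

definition qcls :: "('s::semiring_1, 'a, 'c) smod_scheme \<Rightarrow> 'a set \<Rightarrow> 'a \<Rightarrow> 'a set" where
  "qcls X K x = {y. qrel X K x y}"

definition Quot :: "('s::semiring_1, 'a, 'c) smod_scheme \<Rightarrow> 'a set \<Rightarrow> ('s, 'a set) smod" where
  "Quot X K = \<lparr>scar = qcls X K ` scar X,
     sadd = (\<lambda>A B. qcls X K (sadd X (SOME a. a \<in> A) (SOME b. b \<in> B))),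
     szero = qcls X K (szero X),
     ssmul = (\<lambda>r A. qcls X K (ssmul X r (SOME a. a \<in> A)))\<rparr>"

context
  fixes X :: "('s::semiring_1, 'a, 'c) smod_scheme" and K
  assumes X: "semimodule X" and K: "subm X K"
begin

lemma K_sub: "a \<in> K \<Longrightarrow> a \<in> scar X" using K by (auto simp: subm_def)
lemma K_zero: "szero X \<in> K" using K by (auto simp: subm_def)
lemma K_add: "a \<in> K \<Longrightarrow> b \<in> K \<Longrightarrow> sadd X a b \<in> K" using K by (auto simp: subm_def)
lemma K_smul: "a \<in> K \<Longrightarrow> ssmul X r a \<in> K" using K by (auto simp: subm_def)

lemma qrel_refl: "x \<in> scar X \<Longrightarrow> qrel X K x x"
  unfolding qrel_def using K_zero by blast

lemma qrel_sym: "qrel X K x y \<Longrightarrow> qrel X K y x"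
  unfolding qrel_def by metis

lemma qrel_trans: assumes "qrel X K x y" "qrel X K y z" shows "qrel X K x z"
proof -
  obtain a b c d where abcd: "a \<in> K" "b \<in> K" "c \<in> K" "d \<in> K"
    and e1: "sadd X x a = sadd X y b" and e2: "sadd X y c = sadd X z d"
    and xyz: "x \<in> scar X" "y \<in> scar X" "z \<in> scar X"
    using assms unfolding qrel_def by blast
  have s: "a \<in> scar X" "b \<in> scar X" "c \<in> scar X" "d \<in> scar X" using abcd K_sub by auto
  note cl = sm_add_closed[OF X]
  have "sadd X x (sadd X a c) = sadd X (sadd X x a) c" using s xyz by (simp add: sm_assoc[OF X])
  also have "\<dots> = sadd X (sadd X y b) c" using e1 by simp
  also have "\<dots> = sadd X (sadd X y c) b" using s xyz cl by (metis sm_assoc[OF X] sm_comm[OF X])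
  also have "\<dots> = sadd X (sadd X z d) b" using e2 by simp
  also have "\<dots> = sadd X z (sadd X d b)" using s xyz by (simp add: sm_assoc[OF X])
  finally show ?thesis unfolding qrel_def using xyz abcd K_add by blast
qed

lemma qrel_add: assumes "qrel X K x y" "qrel X K x' y'" shows "qrel X K (sadd X x x') (sadd X y y')"
proof -
  obtain a b c d where abcd: "a \<in> K" "b \<in> K" "c \<in> K" "d \<in> K"
    and e1: "sadd X x a = sadd X y b" and e2: "sadd X x' c = sadd X y' d"
    and xyz: "x \<in> scar X" "y \<in> scar X" "x' \<in> scar X" "y' \<in> scar X"
    using assms unfolding qrel_def by blast
  have s: "a \<in> scar X" "b \<in> scar X" "c \<in> scar X" "d \<in> scar X" using abcd K_sub by auto
  note cl = sm_add_closed[OF X]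
  have "sadd X (sadd X x x') (sadd X a c) = sadd X (sadd X x a) (sadd X x' c)"
    using s xyz cl by (metis sm_assoc[OF X] sm_lcomm[OF X])
  also have "\<dots> = sadd X (sadd X y b) (sadd X y' d)" using e1 e2 by simp
  also have "\<dots> = sadd X (sadd X y y') (sadd X b d)"
    using s xyz cl by (metis sm_assoc[OF X] sm_lcomm[OF X])
  finally show ?thesis unfolding qrel_def using xyz abcd K_add cl by blast
qed

lemma qrel_smul: assumes "qrel X K x y" shows "qrel X K (ssmul X r x) (ssmul X r y)"
proof -
  obtain a b where ab: "a \<in> K" "b \<in> K" and e1: "sadd X x a = sadd X y b"
    and xy: "x \<in> scar X" "y \<in> scar X"
    using assms unfolding qrel_def by blast
  have s: "a \<in> scar X" "b \<in> scar X" using ab K_sub by auto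
  have "sadd X (ssmul X r x) (ssmul X r a) = sadd X (ssmul X r y) (ssmul X r b)"
    using e1 s xy by (metis sm_smul_add[OF X])
  then show ?thesis unfolding qrel_def using xy ab K_smul sm_smul_closed[OF X] by blast
qed

lemma qrel_eq: "qrel X K x y \<Longrightarrow> qcls X K x = qcls X K y"
  unfolding qcls_def by (auto intro: qrel_trans qrel_sym)

lemma qcls_eq: assumes "x \<in> scar X" shows "qcls X K x = qcls X K y \<longleftrightarrow> qrel X K x y"
proof
  assume "qcls X K x = qcls X K y"
  moreover have "x \<in> qcls X K x" using assms qrel_refl by (simp add: qcls_def)
  ultimately have "qrel X K y x" by (simp add: qcls_def)
  then show "qrel X K x y" by (rule qrel_sym)
qed (rule qrel_eq)

lemma some_cls: "x \<in> scar X \<Longrightarrow> qrel X K x (SOME a. a \<in> qcls X K x)"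
proof -
  assume x: "x \<in> scar X"
  then have "x \<in> qcls X K x" by (simp add: qcls_def qrel_refl)
  then have "(SOME a. a \<in> qcls X K x) \<in> qcls X K x" by (rule someI)
  then show ?thesis by (simp add: qcls_def)
qed

lemma Quot_linear: "linear_map X (Quot X K) (qcls X K)"
  unfolding linear_map_def
proof (intro conjI ballI allI)
  fix x assume "x \<in> scar X" then show "qcls X K x \<in> scar (Quot X K)" by (simp add: Quot_def)
next
  fix x y assume x: "x \<in> scar X" and y: "y \<in> scar X"
  have "qrel X K (sadd X x y) (sadd X (SOME a. a \<in> qcls X K x) (SOME b. b \<in> qcls X K y))"
    using qrel_add[OF some_cls[OF x] some_cls[OF y]] .
  then show "qcls X K (sadd X x y) = sadd (Quot X K) (qcls X K x) (qcls X K y)"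
    unfolding Quot_def by (simp add: qrel_eq)
next
  show "qcls X K (szero X) = szero (Quot X K)" by (simp add: Quot_def)
next
  fix r x assume x: "x \<in> scar X"
  have "qrel X K (ssmul X r x) (ssmul X r (SOME a. a \<in> qcls X K x))"
    using qrel_smul[OF some_cls[OF x]] .
  then show "qcls X K (ssmul X r x) = ssmul (Quot X K) r (qcls X K x)"
    unfolding Quot_def by (simp add: qrel_eq)
qed

lemma Quot_sm: "semimodule (Quot X K)"
proof (rule semimodule_image[OF X Quot_linear])
  show "qcls X K ` scar X = scar (Quot X K)" by (simp add: Quot_def)
  show "\<forall>r. ssmul (Quot X K) r (szero (Quot X K)) = szero (Quot X K)"
  proof
    fix r
    have "qrel X K (ssmul X r (szero X)) (ssmul X r (SOME a. a \<in> qcls X K (szero X)))"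
      using qrel_smul some_cls sm_zero[OF X] by blast
    then show "ssmul (Quot X K) r (szero (Quot X K)) = szero (Quot X K)"
      unfolding Quot_def using qrel_eq[OF qrel_sym] sm_smul_zero[OF X] by simp
  qed
qed

end



lemma po_ex:
  assumes "is_pushout_wrt TYPE('q) L M N f g P g' f'" "semimodule (Q :: ('s::semiring_1, 'q) smod)"
    "linear_map M Q gs" "linear_map N Q fs" "\<forall>x\<in>scar L. gs (f x) = fs (g x)"
  shows "\<exists>\<phi>. linear_map P Q \<phi> \<and> (\<forall>x\<in>scar M. \<phi> (g' x) = gs x) \<and> (\<forall>y\<in>scar N. \<phi> (f' y) = fs y)"
  using assms unfolding is_pushout_wrt_def by blast

lemma po_uniq:
  assumes "is_pushout_wrt TYPE('q) L M N f g P g' f'" "semimodule (Q :: ('s::semiring_1, 'q) smod)"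
    "linear_map M Q gs" "linear_map N Q fs" "\<forall>x\<in>scar L. gs (f x) = fs (g x)"
    "linear_map P Q \<phi>" "\<forall>x\<in>scar M. \<phi> (g' x) = gs x" "\<forall>y\<in>scar N. \<phi> (f' y) = fs y"
    "linear_map P Q \<psi>" "\<forall>x\<in>scar M. \<psi> (g' x) = gs x" "\<forall>y\<in>scar N. \<psi> (f' y) = fs y"
    "z \<in> scar P"
  shows "\<phi> z = \<psi> z"
  using assms unfolding is_pushout_wrt_def by blast

lemma po_basic:
  assumes "is_pushout_wrt TYPE('q) L M N f g P g' f'"
  shows "linear_map M P g'" "linear_map N P f'" "\<forall>x\<in>scar L. g' (f x) = f' (g x)"
  using assms unfolding is_pushout_wrt_def by blast+

lemma descend:
  assumes X: "semimodule X" and R: "semimodule R" and h: "linear_map X Y h"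
    and hs: "h ` scar X = scar Y" and kn: "k_normal X Y h" and u: "linear_map X R u"
    and uk: "\<forall>k\<in>Ker X Y h. u k = szero R"
  shows "\<exists>v. linear_map Y R v \<and> (\<forall>x\<in>scar X. v (h x) = u x)"
proof -
  have uc: "\<And>x. x \<in> scar X \<Longrightarrow> u x \<in> scar R"
    and ua: "\<And>x y. x \<in> scar X \<Longrightarrow> y \<in> scar X \<Longrightarrow> u (sadd X x y) = sadd R (u x) (u y)"
    and u0: "u (szero X) = szero R"
    and us: "\<And>r x. x \<in> scar X \<Longrightarrow> u (ssmul X r x) = ssmul R r (u x)"
    using u unfolding linear_map_def by auto
  have ha: "\<And>x y. x \<in> scar X \<Longrightarrow> y \<in> scar X \<Longrightarrow> h (sadd X x y) = sadd Y (h x) (h y)"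
    and h0: "h (szero X) = szero Y"
    and hsm: "\<And>r x. x \<in> scar X \<Longrightarrow> h (ssmul X r x) = ssmul Y r (h x)"
    using h unfolding linear_map_def by auto
  have same: "u x = u x'" if x: "x \<in> scar X" "x' \<in> scar X" "h x = h x'" for x x'
  proof -
    obtain k k' where k: "k \<in> Ker X Y h" "k' \<in> Ker X Y h" and eq: "sadd X x k = sadd X x' k'"
      using kn x unfolding k_normal_def by blast
    have ks: "k \<in> scar X" "k' \<in> scar X" using k by (auto simp: Ker_def)
    have "u (sadd X x k) = u (sadd X x' k')" using eq by simp
    then have "sadd R (u x) (szero R) = sadd R (u x') (szero R)"
      using ua ks x uk k by simp
    then show "u x = u x'" using sm_rzero[OF R] uc x by simp
  qed
  define v where "v y = u (SOME x. x \<in> scar X \<and> h x = y)" for y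
  have vh: "v (h x) = u x" if x: "x \<in> scar X" for x
  proof -
    have "\<exists>x'. x' \<in> scar X \<and> h x' = h x" using x by blast
    then have "(SOME x'. x' \<in> scar X \<and> h x' = h x) \<in> scar X \<and> h (SOME x'. x' \<in> scar X \<and> h x' = h x) = h x"
      by (rule someI_ex)
    then show ?thesis unfolding v_def using same x by blast
  qed
  have ex: "\<And>y. y \<in> scar Y \<Longrightarrow> \<exists>x\<in>scar X. y = h x" using hs by auto
  note cl = sm_zero[OF X] sm_add_closed[OF X] sm_smul_closed[OF X]
  have "linear_map Y R v" unfolding linear_map_def
  proof (intro conjI ballI allI)
    fix y assume "y \<in> scar Y"
    then obtain x where "x \<in> scar X" "y = h x" using ex by blast
    then show "v y \<in> scar R" using vh uc by simp
  next
    fix y y' assume "y \<in> scar Y" "y' \<in> scar Y"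
    then obtain x x' where "x \<in> scar X" "y = h x" "x' \<in> scar X" "y' = h x'" using ex by blast
    then show "v (sadd Y y y') = sadd R (v y) (v y')"
      using vh ha[symmetric] ua cl by simp
  next
    show "v (szero Y) = szero R" using vh[OF cl(1)] h0 u0 by simp
  next
    fix r y assume "y \<in> scar Y"
    then obtain x where "x \<in> scar X" "y = h x" using ex by blast
    then show "v (ssmul Y r y) = ssmul R r (v y)"
      using vh hsm[symmetric] us cl by simp
  qed
  then show ?thesis using vh by blast
qed



lemma subm_carrier: "semimodule X \<Longrightarrow> subm X (scar X)"
  by (simp add: subm_def sm_zero sm_add_closed sm_smul_closed)

lemma subm_image: assumes "subm X K" "linear_map X Y h" shows "subm Y (h ` K)"
proof -
  have KX: "K \<subseteq> scar X" using assms(1) by (simp add: subm_def)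
  have K: "szero X \<in> K" "\<And>a b. a \<in> K \<Longrightarrow> b \<in> K \<Longrightarrow> sadd X a b \<in> K"
    "\<And>r a. a \<in> K \<Longrightarrow> ssmul X r a \<in> K" using assms(1) by (auto simp: subm_def)
  have h: "\<And>x. x \<in> scar X \<Longrightarrow> h x \<in> scar Y"
    "\<And>x y. x \<in> scar X \<Longrightarrow> y \<in> scar X \<Longrightarrow> sadd Y (h x) (h y) = h (sadd X x y)"
    "szero Y = h (szero X)"
    "\<And>r x. x \<in> scar X \<Longrightarrow> ssmul Y r (h x) = h (ssmul X r x)"
    using assms(2) unfolding linear_map_def by auto
  show ?thesis unfolding subm_def
  proof (intro conjI ballI allI)
    show "h ` K \<subseteq> scar Y" using KX h(1) by auto
    show "szero Y \<in> h ` K" using K(1) h(3) by simp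
  next
    fix a b assume "a \<in> h ` K" "b \<in> h ` K"
    then obtain x y where xy: "x \<in> K" "y \<in> K" "a = h x" "b = h y" by auto
    then have "sadd Y a b = h (sadd X x y)" using h(2) KX by auto
    then show "sadd Y a b \<in> h ` K" using K(2)[OF xy(1,2)] by (rule image_eqI)
  next
    fix r a assume "a \<in> h ` K"
    then obtain x where xy: "x \<in> K" "a = h x" by auto
    then have "ssmul Y r a = h (ssmul X r x)" using h(4) KX by auto
    then show "ssmul Y r a \<in> h ` K" using K(3)[OF xy(1)] by (rule image_eqI)
  qed
qed

lemma subm_Ker: assumes "semimodule X" "semimodule Y" "linear_map X Y h" shows "subm X (Ker X Y h)"
proof -
  have h: "\<And>x y. x \<in> scar X \<Longrightarrow> y \<in> scar X \<Longrightarrow> h (sadd X x y) = sadd Y (h x) (h y)"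
    "h (szero X) = szero Y"
    "\<And>r x. x \<in> scar X \<Longrightarrow> h (ssmul X r x) = ssmul Y r (h x)"
    using assms(3) unfolding linear_map_def by auto
  show ?thesis unfolding subm_def Ker_def
    using h sm_lzero[OF assms(2) sm_zero[OF assms(2)]] sm_smul_zero[OF assms(2)]
      sm_zero[OF assms(1)] sm_add_closed[OF assms(1)] sm_smul_closed[OF assms(1)]
    by auto
qed

lemma sm_swap4: "semimodule X \<Longrightarrow> a \<in> scar X \<Longrightarrow> b \<in> scar X \<Longrightarrow> c \<in> scar X \<Longrightarrow> d \<in> scar X \<Longrightarrow>
  sadd X (sadd X a b) (sadd X c d) = sadd X (sadd X a c) (sadd X b d)"
proof -
  assume X: "semimodule X" and h: "a \<in> scar X" "b \<in> scar X" "c \<in> scar X" "d \<in> scar X"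
  have "sadd X (sadd X a b) (sadd X c d) = sadd X a (sadd X b (sadd X c d))"
    using h by (simp add: sm_assoc[OF X] sm_add_closed[OF X])
  also have "\<dots> = sadd X a (sadd X c (sadd X b d))" using h sm_lcomm[OF X, of b c d] by simp
  also have "\<dots> = sadd X (sadd X a c) (sadd X b d)"
    using h by (simp add: sm_assoc[OF X] sm_add_closed[OF X])
  finally show ?thesis .
qed

lemma inj_img: "inj f \<Longrightarrow> inj (\<lambda>A. f ` A)"
  by (simp add: inj_def inj_image_eq_iff)

lemma inK_cls: assumes X: "semimodule X" and K: "subm X K" and a: "a \<in> K"
  shows "qcls X K a = qcls X K (szero X)"
proof -
  have aX: "a \<in> scar X" using K_sub[OF X K a] .
  have "sadd X a (szero X) = sadd X (szero X) a" using sm_rzero[OF X aX] sm_lzero[OF X aX] by simp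
  then have "qrel X K a (szero X)" unfolding qrel_def using K_zero[OF X K] a aX sm_zero[OF X] by blast
  then show ?thesis by (rule qrel_eq[OF X K])
qed

lemma Quot_zero: "szero (Quot X K) = qcls X K (szero X)" by (simp add: Quot_def)

context
  fixes L :: "('s::semiring_1, 'l) smod" and M :: "('s, 'm) smod"
    and N :: "('s, 'n) smod" and P :: "('s, 'p) smod"
    and f :: "'l \<Rightarrow> 'm" and g :: "'l \<Rightarrow> 'n"
    and g' :: "'m \<Rightarrow> 'p" and f' :: "'n \<Rightarrow> 'p"
  assumes L: "semimodule L" and M: "semimodule M" and N: "semimodule N" and P: "semimodule P"
    and f: "linear_map L M f" and g: "linear_map L N g"
    and po: "is_pushout_wrt TYPE(('l + 'm + 'n + 'p) set) L M N f g P g' f'"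
begin

lemma g'lin: "linear_map M P g'" and f'lin: "linear_map N P f'"
  and comm: "\<And>x. x \<in> scar L \<Longrightarrow> g' (f x) = f' (g x)"
  using po_basic[OF po] by auto

lemma po_gen:
  assumes S: "S \<subseteq> scar P" "szero P \<in> S" "\<forall>a\<in>S. \<forall>b\<in>S. sadd P a b \<in> S" "\<forall>r. \<forall>a\<in>S. ssmul P r a \<in> S"
   and gS: "g' ` scar M \<subseteq> S" and fS: "f' ` scar N \<subseteq> S"
  shows "scar P \<subseteq> S"
proof
  fix z assume z: "z \<in> scar P"
  define e :: "'p \<Rightarrow> ('l + 'm + 'n + 'p) set" where "e z = {Inr (Inr (Inr z))}" for z
  have inj: "inj e" unfolding inj_def e_def by auto
  define PS where "PS = P\<lparr>scar := S\<rparr>"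
  have PSsm: "semimodule PS" unfolding PS_def by (rule sub_semimodule[OF P S])
  have lgS: "linear_map M PS g'" using g'lin gS unfolding PS_def linear_map_def by auto
  have lfS: "linear_map N PS f'" using f'lin fS unfolding PS_def linear_map_def by auto
  have QS: "semimodule (transp e PS)" by (rule transp_sm[OF inj PSsm])
  have QP: "semimodule (transp e P)" by (rule transp_sm[OF inj P])
  have eS: "linear_map PS (transp e PS) e" by (rule transp_linear[OF inj])
  have eP: "linear_map P (transp e P) e" by (rule transp_linear[OF inj])
  obtain \<phi> where \<phi>: "linear_map P (transp e PS) \<phi>" "\<forall>x\<in>scar M. \<phi> (g' x) = e (g' x)"
      "\<forall>y\<in>scar N. \<phi> (f' y) = e (f' y)"
    using po_ex[OF po QS linear_comp[OF lgS eS] linear_comp[OF lfS eS]] comm by auto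
  have eqT: "transp e PS = (transp e P)\<lparr>scar := e ` S\<rparr>" by (simp add: transp_def PS_def)
  have \<phi>P: "linear_map P (transp e P) \<phi>"
    by (rule linear_widen[OF \<phi>(1)[unfolded eqT]]) (use S(1) in \<open>auto simp: transp_def\<close>)
  have "\<phi> z = e z"
    by (rule po_uniq[OF po QP linear_comp[OF g'lin eP] linear_comp[OF f'lin eP] _ \<phi>P \<phi>(2,3) eP _ _ z])
       (use comm in auto)
  moreover have "\<phi> z \<in> e ` S" using \<phi>(1) z eqT unfolding linear_map_def by auto
  ultimately show "z \<in> S" using inj by (auto simp: inj_def)
qed

lemma decomp: assumes "z \<in> scar P" shows "\<exists>m\<in>scar M. \<exists>n\<in>scar N. z = sadd P (g' m) (f' n)"
proof -
  define S where "S = {z. \<exists>m\<in>scar M. \<exists>n\<in>scar N. z = sadd P (g' m) (f' n)}"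
  have gc: "\<And>x. x \<in> scar M \<Longrightarrow> g' x \<in> scar P"
    and ga: "\<And>x y. x \<in> scar M \<Longrightarrow> y \<in> scar M \<Longrightarrow> g' (sadd M x y) = sadd P (g' x) (g' y)"
    and g0: "g' (szero M) = szero P"
    and gs: "\<And>r x. x \<in> scar M \<Longrightarrow> g' (ssmul M r x) = ssmul P r (g' x)"
    using g'lin unfolding linear_map_def by auto
  have fc: "\<And>x. x \<in> scar N \<Longrightarrow> f' x \<in> scar P"
    and fa: "\<And>x y. x \<in> scar N \<Longrightarrow> y \<in> scar N \<Longrightarrow> f' (sadd N x y) = sadd P (f' x) (f' y)"
    and f0: "f' (szero N) = szero P"
    and fs: "\<And>r x. x \<in> scar N \<Longrightarrow> f' (ssmul N r x) = ssmul P r (f' x)"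
    using f'lin unfolding linear_map_def by auto
  have "scar P \<subseteq> S"
  proof (rule po_gen)
    show "S \<subseteq> scar P" unfolding S_def using gc fc sm_add_closed[OF P] by auto
    have "szero P = sadd P (g' (szero M)) (f' (szero N))"
      using g0 f0 sm_lzero[OF P sm_zero[OF P]] by simp
    then show "szero P \<in> S" unfolding S_def using sm_zero[OF M] sm_zero[OF N] by blast
    show "\<forall>a\<in>S. \<forall>b\<in>S. sadd P a b \<in> S" unfolding S_def
    proof (clarify)
      fix m n m' n' assume h: "m \<in> scar M" "n \<in> scar N" "m' \<in> scar M" "n' \<in> scar N"
      have "sadd P (sadd P (g' m) (f' n)) (sadd P (g' m') (f' n')) =
            sadd P (sadd P (g' m) (g' m')) (sadd P (f' n) (f' n'))"
        by (rule sm_swap4[OF P]) (use h gc fc in auto)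
      also have "\<dots> = sadd P (g' (sadd M m m')) (f' (sadd N n n'))"
        using h by (simp add: ga fa)
      finally have "sadd P (sadd P (g' m) (f' n)) (sadd P (g' m') (f' n')) =
            sadd P (g' (sadd M m m')) (f' (sadd N n n'))" .
      then show "\<exists>ma\<in>scar M. \<exists>na\<in>scar N.
        sadd P (sadd P (g' m) (f' n)) (sadd P (g' m') (f' n')) = sadd P (g' ma) (f' na)"
        using h sm_add_closed[OF M] sm_add_closed[OF N] by blast
    qed
    show "\<forall>r. \<forall>a\<in>S. ssmul P r a \<in> S" unfolding S_def
    proof (clarify)
      fix r m n assume h: "m \<in> scar M" "n \<in> scar N"
      have "ssmul P r (sadd P (g' m) (f' n)) = sadd P (g' (ssmul M r m)) (f' (ssmul N r n))"
        using h by (simp add: sm_smul_add[OF P] gc fc gs fs)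
      then show "\<exists>ma\<in>scar M. \<exists>na\<in>scar N. ssmul P r (sadd P (g' m) (f' n)) = sadd P (g' ma) (f' na)"
        using h sm_smul_closed[OF M] sm_smul_closed[OF N] by blast
    qed
    show "g' ` scar M \<subseteq> S"
    proof
      fix z assume "z \<in> g' ` scar M"
      then obtain m where m: "m \<in> scar M" "z = g' m" by blast
      then have "z = sadd P (g' m) (f' (szero N))" using f0 sm_rzero[OF P gc[OF m(1)]] by simp
      then show "z \<in> S" unfolding S_def using sm_zero[OF N] m(1) by blast
    qed
    show "f' ` scar N \<subseteq> S"
    proof
      fix z assume "z \<in> f' ` scar N"
      then obtain n where n: "n \<in> scar N" "z = f' n" by blast
      then have "z = sadd P (g' (szero M)) (f' n)" using g0 sm_lzero[OF P fc[OF n(1)]] by simp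
      then show "z \<in> S" unfolding S_def using sm_zero[OF M] n(1) by blast
    qed
  qed
  then show ?thesis using assms unfolding S_def by auto
qed


lemma part1: assumes sf: "surjective_map L M f" shows "surjective_map N P f'"
  unfolding surjective_map_def
proof
  show "f' ` scar N \<subseteq> scar P" using f'lin by (auto simp: linear_map_def)
  show "scar P \<subseteq> f' ` scar N"
  proof
    fix z assume z: "z \<in> scar P"
    obtain m n where mn: "m \<in> scar M" "n \<in> scar N" "z = sadd P (g' m) (f' n)" using decomp[OF z] by blast
    obtain l where l: "l \<in> scar L" "m = f l" using sf mn unfolding surjective_map_def by blast
    have gl: "g l \<in> scar N" using g l unfolding linear_map_def by auto
    have "z = sadd P (f' (g l)) (f' n)" using mn l comm by simp
    also have "\<dots> = f' (sadd N (g l) n)" using f'lin gl mn unfolding linear_map_def by simp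
    finally show "z \<in> f' ` scar N" using sm_add_closed[OF N gl mn(2)] by blast
  qed
qed

lemma part2: assumes inorm: "i_normal L M f" shows "i_normal N P f'"
proof -
  define K where "K = f ` scar L"
  have subK: "subm M K" unfolding K_def by (rule subm_image[OF subm_carrier[OF L] f])
  define e :: "'m set \<Rightarrow> ('l + 'm + 'n + 'p) set" where "e = (\<lambda>A. (\<lambda>m. Inr (Inl m)) ` A)"
  have inj: "inj e" unfolding e_def by (rule inj_img) (simp add: inj_def)
  define Q where "Q = transp e (Quot M K)"
  have Q: "semimodule Q" unfolding Q_def by (rule transp_sm[OF inj Quot_sm[OF M subK]])
  have pi: "linear_map M (Quot M K) (qcls M K)" by (rule Quot_linear[OF M subK])
  have gs: "linear_map M Q (\<lambda>m. e (qcls M K m))" unfolding Q_def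
    by (rule linear_comp[OF pi transp_linear[OF inj]])
  have fs: "linear_map N Q (\<lambda>_. szero Q)" by (rule linear_zero[OF Q])
  have szQ: "szero Q = e (qcls M K (szero M))" by (simp add: Q_def transp_def Quot_def)
  have com: "\<forall>x\<in>scar L. e (qcls M K (f x)) = szero Q"
  proof
    fix x assume "x \<in> scar L"
    then have "f x \<in> K" unfolding K_def by blast
    then show "e (qcls M K (f x)) = szero Q" using inK_cls[OF M subK] szQ by simp
  qed
  obtain \<phi> where \<phi>: "linear_map P Q \<phi>" "\<forall>x\<in>scar M. \<phi> (g' x) = e (qcls M K x)"
      "\<forall>y\<in>scar N. \<phi> (f' y) = szero Q"
    using po_ex[OF po Q gs fs com] by blast
  have \<phi>a: "\<And>x y. x \<in> scar P \<Longrightarrow> y \<in> scar P \<Longrightarrow> \<phi> (sadd P x y) = sadd Q (\<phi> x) (\<phi> y)"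
    and \<phi>c: "\<And>x. x \<in> scar P \<Longrightarrow> \<phi> x \<in> scar Q" using \<phi>(1) unfolding linear_map_def by auto
  have f'c: "\<And>x. x \<in> scar N \<Longrightarrow> f' x \<in> scar P" and f'0: "f' (szero N) = szero P"
    using f'lin unfolding linear_map_def by auto
  have g'c: "\<And>x. x \<in> scar M \<Longrightarrow> g' x \<in> scar P" using g'lin unfolding linear_map_def by auto
  show ?thesis unfolding i_normal_def
  proof
    show "f' ` scar N \<subseteq> sub_closure P (f' ` scar N)"
    proof
      fix z assume "z \<in> f' ` scar N"
      then obtain n where n: "n \<in> scar N" "z = f' n" by blast
      have "sadd P z (f' (szero N)) = f' n" using n f'0 sm_rzero[OF P f'c[OF n(1)]] by simp
      then show "z \<in> sub_closure P (f' ` scar N)" unfolding sub_closure_def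
        using n f'c sm_zero[OF N] by blast
    qed
    show "sub_closure P (f' ` scar N) \<subseteq> f' ` scar N"
    proof
      fix y assume "y \<in> sub_closure P (f' ` scar N)"
      then obtain n1 n2 where y: "y \<in> scar P" and n12: "n1 \<in> scar N" "n2 \<in> scar N"
        and eq: "sadd P y (f' n1) = f' n2" unfolding sub_closure_def by blast
      obtain m n where mn: "m \<in> scar M" "n \<in> scar N" "y = sadd P (g' m) (f' n)"
        using decomp[OF y] by blast
      have gsm: "e (qcls M K m) \<in> scar Q" using gs mn(1) unfolding linear_map_def by auto
      have "\<phi> y = sadd Q (e (qcls M K m)) (szero Q)"
        using \<phi>a[OF g'c[OF mn(1)] f'c[OF mn(2)]] \<phi>(2,3) mn by simp
      also have "\<dots> = e (qcls M K m)" using sm_rzero[OF Q gsm] .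
      finally have py: "\<phi> y = e (qcls M K m)" .
      have "\<phi> (sadd P y (f' n1)) = sadd Q (\<phi> y) (szero Q)"
        using \<phi>a[OF y f'c[OF n12(1)]] \<phi>(3) n12 by simp
      also have "\<dots> = \<phi> y" using sm_rzero[OF Q \<phi>c[OF y]] .
      finally have "\<phi> y = szero Q" using eq \<phi>(3) n12 by simp
      then have "e (qcls M K m) = e (qcls M K (szero M))" using py szQ by simp
      then have "qcls M K m = qcls M K (szero M)" using inj by (simp add: inj_eq)
      then have "qrel M K m (szero M)" using qcls_eq[OF M subK mn(1)] by simp
      then obtain a b where ab: "a \<in> K" "b \<in> K" "sadd M m a = sadd M (szero M) b"
        unfolding qrel_def by blast
      have "sadd M m a = b" using ab sm_lzero[OF M K_sub[OF M subK ab(2)]] by simp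
      then have "m \<in> sub_closure M K" unfolding sub_closure_def using mn(1) ab by blast
      then have "m \<in> K" using inorm unfolding i_normal_def K_def by simp
      then obtain l where l: "l \<in> scar L" "m = f l" unfolding K_def by blast
      have gl: "g l \<in> scar N" using g l unfolding linear_map_def by auto
      have "y = sadd P (f' (g l)) (f' n)" using mn l comm by simp
      also have "\<dots> = f' (sadd N (g l) n)" using f'lin gl mn unfolding linear_map_def by simp
      finally show "y \<in> f' ` scar N" using sm_add_closed[OF N gl mn(2)] by blast
    qed
  qed
qed

lemma part3: assumes ne: "normal_epi L M f" shows "normal_epi N P f'"
proof -
  have fsurj: "f ` scar L = scar M" and kn: "k_normal L M f"
    using ne unfolding normal_epi_def surjective_map_def by auto
  have sP: "surjective_map N P f'" using part1 ne unfolding normal_epi_def by blast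
  define K where "K = g ` Ker L M f"
  have subK: "subm N K" unfolding K_def by (rule subm_image[OF subm_Ker[OF L M f] g])
  define e :: "'n set \<Rightarrow> ('l + 'm + 'n + 'p) set" where "e = (\<lambda>A. (\<lambda>n. Inr (Inr (Inl n))) ` A)"
  have inj: "inj e" unfolding e_def by (rule inj_img) (simp add: inj_def)
  define Q where "Q = transp e (Quot N K)"
  have QN: "semimodule (Quot N K)" by (rule Quot_sm[OF N subK])
  have Q: "semimodule Q" unfolding Q_def by (rule transp_sm[OF inj QN])
  have pi: "linear_map N (Quot N K) (qcls N K)" by (rule Quot_linear[OF N subK])
  have u: "linear_map L (Quot N K) (\<lambda>l. qcls N K (g l))" by (rule linear_comp[OF g pi])
  have uk: "\<forall>k\<in>Ker L M f. qcls N K (g k) = szero (Quot N K)"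
  proof
    fix k assume "k \<in> Ker L M f"
    then have "g k \<in> K" unfolding K_def by blast
    then show "qcls N K (g k) = szero (Quot N K)" using inK_cls[OF N subK] Quot_zero by metis
  qed
  obtain v where v: "linear_map M (Quot N K) v" "\<forall>x\<in>scar L. v (f x) = qcls N K (g x)"
    using descend[OF L QN f fsurj kn u uk] by blast
  have gs: "linear_map M Q (\<lambda>m. e (v m))" unfolding Q_def
    by (rule linear_comp[OF v(1) transp_linear[OF inj]])
  have fs: "linear_map N Q (\<lambda>n. e (qcls N K n))" unfolding Q_def
    by (rule linear_comp[OF pi transp_linear[OF inj]])
  have com: "\<forall>x\<in>scar L. e (v (f x)) = e (qcls N K (g x))" using v(2) by simp
  obtain \<phi> where \<phi>: "linear_map P Q \<phi>" "\<forall>x\<in>scar M. \<phi> (g' x) = e (v x)"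
      "\<forall>y\<in>scar N. \<phi> (f' y) = e (qcls N K y)"
    using po_ex[OF po Q gs fs com] by blast
  have KK: "a \<in> Ker N P f'" if a: "a \<in> K" for a
  proof -
    obtain k where k: "k \<in> scar L" "f k = szero M" "a = g k" using a unfolding K_def Ker_def by blast
    have "f' a = g' (f k)" using comm[OF k(1)] k(3) by simp
    also have "\<dots> = szero P" using k g'lin unfolding linear_map_def by simp
    finally show ?thesis using K_sub[OF N subK a] unfolding Ker_def by simp
  qed
  have "k_normal N P f'" unfolding k_normal_def
  proof (intro ballI impI)
    fix n1 n2 assume n: "n1 \<in> scar N" "n2 \<in> scar N" and eq: "f' n1 = f' n2"
    have "e (qcls N K n1) = \<phi> (f' n1)" using \<phi>(3) n by simp
    also have "\<dots> = \<phi> (f' n2)" using eq by simp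
    also have "\<dots> = e (qcls N K n2)" using \<phi>(3) n by simp
    finally have "qcls N K n1 = qcls N K n2" using inj by (simp add: inj_eq)
    then have "qrel N K n1 n2" using qcls_eq[OF N subK n(1)] by simp
    then obtain a b where ab: "a \<in> K" "b \<in> K" "sadd N n1 a = sadd N n2 b"
      unfolding qrel_def by blast
    then show "\<exists>k\<in>Ker N P f'. \<exists>k'\<in>Ker N P f'. sadd N n1 k = sadd N n2 k'" using KK by blast
  qed
  then show ?thesis unfolding normal_epi_def using sP by blast
qed

lemma part4: assumes fi: "inj_on f (scar L)" and ne: "normal_epi L N g" shows "inj_on f' (scar N)"
proof -
  have gsurj: "g ` scar L = scar N" and kn: "k_normal L N g"
    using ne unfolding normal_epi_def surjective_map_def by auto
  define K where "K = f ` Ker L N g"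
  have subK: "subm M K" unfolding K_def by (rule subm_image[OF subm_Ker[OF L N g] f])
  define e :: "'m set \<Rightarrow> ('l + 'm + 'n + 'p) set" where "e = (\<lambda>A. (\<lambda>m. Inr (Inl m)) ` A)"
  have inj: "inj e" unfolding e_def by (rule inj_img) (simp add: inj_def)
  define Q where "Q = transp e (Quot M K)"
  have QM: "semimodule (Quot M K)" by (rule Quot_sm[OF M subK])
  have Q: "semimodule Q" unfolding Q_def by (rule transp_sm[OF inj QM])
  have pi: "linear_map M (Quot M K) (qcls M K)" by (rule Quot_linear[OF M subK])
  have u: "linear_map L (Quot M K) (\<lambda>l. qcls M K (f l))" by (rule linear_comp[OF f pi])
  have uk: "\<forall>k\<in>Ker L N g. qcls M K (f k) = szero (Quot M K)"
  proof
    fix k assume "k \<in> Ker L N g"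
    then have "f k \<in> K" unfolding K_def by blast
    then show "qcls M K (f k) = szero (Quot M K)" using inK_cls[OF M subK] Quot_zero by metis
  qed
  obtain v where v: "linear_map N (Quot M K) v" "\<forall>x\<in>scar L. v (g x) = qcls M K (f x)"
    using descend[OF L QM g gsurj kn u uk] by blast
  have gs: "linear_map M Q (\<lambda>m. e (qcls M K m))" unfolding Q_def
    by (rule linear_comp[OF pi transp_linear[OF inj]])
  have fs: "linear_map N Q (\<lambda>n. e (v n))" unfolding Q_def
    by (rule linear_comp[OF v(1) transp_linear[OF inj]])
  have com: "\<forall>x\<in>scar L. e (qcls M K (f x)) = e (v (g x))" using v(2) by simp
  obtain \<phi> where \<phi>: "linear_map P Q \<phi>" "\<forall>x\<in>scar M. \<phi> (g' x) = e (qcls M K x)"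
      "\<forall>y\<in>scar N. \<phi> (f' y) = e (v y)"
    using po_ex[OF po Q gs fs com] by blast
  have fc: "\<And>x. x \<in> scar L \<Longrightarrow> f x \<in> scar M"
    and fa: "\<And>x y. x \<in> scar L \<Longrightarrow> y \<in> scar L \<Longrightarrow> f (sadd L x y) = sadd M (f x) (f y)"
    using f unfolding linear_map_def by auto
  have ga: "\<And>x y. x \<in> scar L \<Longrightarrow> y \<in> scar L \<Longrightarrow> g (sadd L x y) = sadd N (g x) (g y)"
    and gc: "\<And>x. x \<in> scar L \<Longrightarrow> g x \<in> scar N"
    using g unfolding linear_map_def by auto
  show ?thesis unfolding inj_on_def
  proof (intro ballI impI)
    fix n1 n2 assume n: "n1 \<in> scar N" "n2 \<in> scar N" and eq: "f' n1 = f' n2"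
    have "e (v n1) = \<phi> (f' n1)" using \<phi>(3) n by simp
    also have "\<dots> = \<phi> (f' n2)" using eq by simp
    also have "\<dots> = e (v n2)" using \<phi>(3) n by simp
    finally have vv: "v n1 = v n2" using inj by (simp add: inj_eq)
    obtain l1 l2 where l: "l1 \<in> scar L" "l2 \<in> scar L" "n1 = g l1" "n2 = g l2"
      using n gsurj by blast
    have "qcls M K (f l1) = qcls M K (f l2)" using vv v(2) l by simp
    then have "qrel M K (f l1) (f l2)" using qcls_eq[OF M subK fc[OF l(1)]] by simp
    then obtain a b where ab: "a \<in> K" "b \<in> K" "sadd M (f l1) a = sadd M (f l2) b"
      unfolding qrel_def by blast
    obtain k k' where k: "k \<in> scar L" "g k = szero N" "a = f k" "k' \<in> scar L" "g k' = szero N" "b = f k'"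
      using ab(1,2) unfolding K_def Ker_def by blast
    have "f (sadd L l1 k) = f (sadd L l2 k')" using ab(3) k l fa by simp
    then have "sadd L l1 k = sadd L l2 k'"
      using fi sm_add_closed[OF L] l k unfolding inj_on_def by blast
    then have "g (sadd L l1 k) = g (sadd L l2 k')" by simp
    then have "sadd N (g l1) (szero N) = sadd N (g l2) (szero N)" using ga l k by simp
    then show "n1 = n2" using sm_rzero[OF N gc[OF l(1)]] sm_rzero[OF N gc[OF l(2)]] l by simp
  qed
qed

end

theorem mainTheorem3:
  fixes L :: "('s::semiring_1, 'l) smod" and M :: "('s, 'm) smod"
    and N :: "('s, 'n) smod" and P :: "('s, 'p) smod"
    and f :: "'l \<Rightarrow> 'm" and g :: "'l \<Rightarrow> 'n"
    and g' :: "'m \<Rightarrow> 'p" and f' :: "'n \<Rightarrow> 'p"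
  assumes "semimodule L" and "semimodule M" and "semimodule N" and "semimodule P"
    and "linear_map L M f" and "linear_map L N g"
    and po: "is_pushout_wrt TYPE(('l + 'm + 'n + 'p) set) L M N f g P g' f'"
  shows "(surjective_map L M f \<longrightarrow> surjective_map N P f')
       \<and> (i_normal L M f \<longrightarrow> i_normal N P f')
       \<and> (normal_epi L M f \<longrightarrow> normal_epi N P f')
       \<and> (inj_on f (scar L) \<and> normal_epi L N g \<longrightarrow> inj_on f' (scar N))"
  using part1[OF assms] part2[OF assms] part3[OF assms] part4[OF assms] by blast

end
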